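(* Let $p\ge 1$ and let $\hat\lambda_1,\ldots,\hat\lambda_p$ be mutually distinct complex numbers lying in the open left half-plane $\{s\in\mathbb{C}:\operatorname{Re}s<0\}$, such that the set $\{\hat\lambda_1,\ldots,\hat\lambda_p\}$ is closed under complex conjugation. Define $$\beta_j=\frac{\prod_{l=1}^{p}(\hat\lambda_j+\hat\lambda_l)}{\prod_{l=1,\,l\neq j}^{p}(\hat\lambda_j-\hat\lambda_l)},\qquad j=1,\ldots,p,$$ and $$\widehat d(s)=1+\sum_{j=1}^{p}\frac{\beta_j}{s-\hat\lambda_j}.$$ Then $|\widehat d(\mathrm{i}\omega)|=1$ for every $\omega\in\mathbb{R}$ (where $\mathrm{i}=\sqrt{-1}$). Consequently, for any sampling nodes $\xi_1,\ldots,\xi_\ell$ on the imaginary axis, the diagonal scaling matrix $\widehat\Delta=\mathrm{diag}\big(1/|\widehat d(\xi_i)|\big)_{i=1}^{\ell}$ is unitary, so for any matrix $\mathcal{A}\in\mathbb{C}^{\ell\times m}$ and vector $h\in\mathbb{C}^{\ell}$ the weighted least-squares problem $\min_x\|\widehat\Delta(\mathcal{A}x-h)\|_2$ has the same solutions as the unweighted problem $\min_x\|\mathcal{A}x-h\|_2$.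
   Context: This arises in Vector Fitting, where a rational approximant is written in barycentric form $\widehat n(s)/\widehat d(s)$ with poles (nodes) $\hat\lambda_j$, and each iteration solves a least-squares problem whose rows are weighted by $1/|\widehat d(\xi_i)|$ at the sampling nodes $\xi_i$. The $\hat\lambda_j$ here are the mirror images $-\lambda$ of unstable poles $\lambda$ (poles in the open right half-plane) of the current denominator; the $\beta_j$ are chosen so that the zeros of $\widehat d$ are the original unstable poles $-\hat\lambda_j$. *)

theory Defs
  imports "HOL-Analysis.Analysis"
begin

definition vf_beta :: "nat \<Rightarrow> (nat \<Rightarrow> complex) \<Rightarrow> nat \<Rightarrow> complex" where
  "vf_beta p lam j =
     (\<Prod>l\<in>{1..p}. lam j + lam l) / (\<Prod>l\<in>{1..p} - {j}. lam j - lam l)"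

definition vf_dhat :: "nat \<Rightarrow> (nat \<Rightarrow> complex) \<Rightarrow> complex \<Rightarrow> complex" where
  "vf_dhat p lam s = 1 + (\<Sum>j\<in>{1..p}. vf_beta p lam j / (s - lam j))"

text \<open>Matrices / vectors of size l x m are represented as functions on indices
  0..<l, 0..<m.\<close>

definition unitary_nat_mat :: "nat \<Rightarrow> (nat \<Rightarrow> nat \<Rightarrow> complex) \<Rightarrow> bool" where
  "unitary_nat_mat n U \<longleftrightarrow>
     (\<forall>i<n. \<forall>k<n. (\<Sum>j<n. cnj (U j i) * U j k) = (if i = k then 1 else 0))"

definition vec_norm2 :: "nat \<Rightarrow> (nat \<Rightarrow> complex) \<Rightarrow> real" where
  "vec_norm2 n v = sqrt (\<Sum>i<n. (cmod (v i))\<^sup>2)"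

definition mat_vec :: "nat \<Rightarrow> (nat \<Rightarrow> nat \<Rightarrow> complex) \<Rightarrow> (nat \<Rightarrow> complex) \<Rightarrow> nat \<Rightarrow> complex" where
  "mat_vec m A x = (\<lambda>i. \<Sum>k<m. A i k * x k)"

definition vf_Delta :: "nat \<Rightarrow> (nat \<Rightarrow> complex) \<Rightarrow> (nat \<Rightarrow> complex) \<Rightarrow> nat \<Rightarrow> nat \<Rightarrow> complex" where
  "vf_Delta p lam xi i k = (if i = k then complex_of_real (1 / cmod (vf_dhat p lam (xi i))) else 0)"

definition lsq_solutions ::
  "nat \<Rightarrow> nat \<Rightarrow> (nat \<Rightarrow> nat \<Rightarrow> complex) \<Rightarrow> (nat \<Rightarrow> nat \<Rightarrow> complex) \<Rightarrow> (nat \<Rightarrow> complex)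
     \<Rightarrow> (nat \<Rightarrow> complex) set" where
  "lsq_solutions l m W A h =
     {x. (\<forall>k\<ge>m. x k = 0) \<and>
         (\<forall>y. (\<forall>k\<ge>m. y k = 0) \<longrightarrow>
           vec_norm2 l (mat_vec l W (\<lambda>i. mat_vec m A x i - h i))
             \<le> vec_norm2 l (mat_vec l W (\<lambda>i. mat_vec m A y i - h i)))}"

definition id_nat_mat :: "nat \<Rightarrow> nat \<Rightarrow> complex" where
  "id_nat_mat i k = (if i = k then 1 else 0)"

end

theory Submission
  imports Defs "HOL-Computational_Algebra.Polynomial"
begin

lemma pf_identity:
  fixes lam :: "nat \<Rightarrow> complex" and S :: "nat set"
  assumes fin: "finite S" and inj: "inj_on lam S" and s: "s \<notin> lam ` S"
  defines "beta \<equiv> \<lambda>j. (\<Prod>l\<in>S. lam j + lam l) / (\<Prod>l\<in>S - {j}. lam j - lam l)"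
  shows "1 + (\<Sum>j\<in>S. beta j / (s - lam j)) = (\<Prod>l\<in>S. s + lam l) / (\<Prod>l\<in>S. s - lam l)"
proof -
  define A where "A = (\<Prod>l\<in>S. [:lam l, 1:])"
  define B where "B = (\<Prod>l\<in>S. [:- lam l, 1:])"
  define Bj where "Bj = (\<lambda>j. (\<Prod>l\<in>S-{j}. [:- lam l, 1:]))"
  define L where "L = (\<Sum>j\<in>S. smult (beta j) (Bj j))"
  have degA: "degree A = card S" unfolding A_def
    by (subst degree_prod_eq_sum_degree) auto
  have lcA: "coeff A (card S) = 1"
    proof - have "lead_coeff A = 1" unfolding A_def lead_coeff_prod by simp thus ?thesis using degA by simp qed
  have degB: "degree B = card S" unfolding B_def
    by (subst degree_prod_eq_sum_degree) auto
  have lcB: "coeff B (card S) = 1"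
    proof - have "lead_coeff B = 1" unfolding B_def lead_coeff_prod by simp thus ?thesis using degB by simp qed
  have degBj: "degree (Bj j) < card S" if "j \<in> S" for j
  proof -
    have "degree (Bj j) = card (S - {j})" unfolding Bj_def
      by (subst degree_prod_eq_sum_degree) auto
    also have "\<dots> < card S" using that fin card_gt_0_iff[of S] by (auto simp: card_Diff_singleton)
    finally show ?thesis .
  qed
  have cS: "card S > 0 \<or> S = {}" using fin by auto
  have degL: "degree L < card S \<or> L = 0"
  proof (cases "S = {}")
    case True then show ?thesis by (simp add: L_def)
  next
    case False
    then have "card S > 0" using fin by auto
    then have "degree L \<le> card S - 1" unfolding L_def
      by (intro degree_sum_le fin) (use degBj in \<open>fastforce intro: order.trans[OF degree_smult_le]\<close>)
    then show ?thesis using \<open>card S > 0\<close> by auto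
  qed
  have cL: "coeff L (card S) = 0" using degL by (auto intro: coeff_eq_0)
  have degBL: "degree (B + L) \<le> card S"
    using degL degB by (auto intro: degree_add_le)
  have roots: "poly A z = poly (B + L) z" if zS: "z \<in> lam ` S" for z
  proof -
    obtain k where k: "k \<in> S" "z = lam k" using zS by auto
    have Bk: "poly B (lam k) = 0" unfolding B_def poly_prod
      using k fin by (intro prod_zero) auto
    have Bjk: "poly (Bj j) (lam k) = 0" if "j \<in> S" "j \<noteq> k" for j
      unfolding Bj_def poly_prod using k fin that by (intro prod_zero) (auto intro!: bexI[of _ k])
    have nz: "(\<Prod>l\<in>S - {k}. lam k - lam l) \<noteq> 0"
      using fin inj k by (auto simp: inj_on_def)
    have "poly L (lam k) = beta k * poly (Bj k) (lam k)"
      unfolding L_def poly_sum poly_smult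
      by (subst sum.remove[OF fin k(1)], subst sum.neutral) (use Bjk in auto)
    also have "\<dots> = (\<Prod>l\<in>S. lam k + lam l)"
      unfolding beta_def Bj_def poly_prod using nz by simp
    finally show ?thesis unfolding A_def poly_prod k(2) using Bk by (simp add: B_def[symmetric] add.commute)
  qed
  have card: "card (lam ` S) = card S" using card_image[OF inj] .
  have AE: "A = B + L"
    by (rule poly_eqI_degree_lead_coeff[of A "card S" "B + L" "lam ` S"])
       (use lcA lcB cL card degA degBL roots in auto)
  have Bs: "poly B s \<noteq> 0" unfolding B_def poly_prod using s fin by auto
  have "poly L s / poly B s = (\<Sum>j\<in>S. beta j / (s - lam j))"
    unfolding L_def poly_sum sum_divide_distrib
  proof (rule sum.cong[OF refl])
    fix j assume j: "j \<in> S"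
    have eqB: "poly B s = (s - lam j) * poly (Bj j) s"
      unfolding B_def Bj_def poly_prod by (subst prod.remove[OF fin j]) simp
    moreover have "s - lam j \<noteq> 0" using s j by auto
    moreover have "poly (Bj j) s \<noteq> 0" using Bs calculation by auto
    ultimately show "poly (smult (beta j) (Bj j)) s / poly B s = beta j / (s - lam j)"
      unfolding eqB poly_smult by simp
  qed
  moreover have "poly A s / poly B s = 1 + poly L s / poly B s"
    using AE Bs by (simp add: field_simps)
  ultimately show ?thesis unfolding A_def B_def poly_prod by (simp add: add.commute)
qed

lemma diag_matvec:
  assumes "\<And>i k. i < l \<Longrightarrow> k < l \<Longrightarrow> W i k = (if i = k then 1 else 0)"
  shows "vec_norm2 l (mat_vec l W v) = vec_norm2 l v"
proof -
  have "mat_vec l W v i = v i" if "i < l" for i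
  proof -
    have "mat_vec l W v i = (\<Sum>k<l. (if i = k then v k else 0))"
      unfolding mat_vec_def by (rule sum.cong) (use assms that in auto)
    also have "\<dots> = v i" using that by simp
    finally show ?thesis .
  qed
  then show ?thesis unfolding vec_norm2_def by (metis (no_types, lifting) lessThan_iff sum.cong)
qed

lemma cnj_image_eq:
  fixes T :: "complex set"
  assumes "finite T" "\<forall>x\<in>T. cnj x \<in> T"
  shows "cnj ` T = T"
proof (rule card_subset_eq)
  show "cnj ` T \<subseteq> T" using assms by auto
  show "card (cnj ` T) = card T" by (rule card_image) (auto intro: inj_onI)
qed fact

theorem proposition4p1:
  fixes p :: nat and lam :: "nat \<Rightarrow> complex"
  assumes "p \<ge> 1"
    and "inj_on lam {1..p}"
    and "\<forall>j\<in>{1..p}. Re (lam j) < 0"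
    and "\<forall>j\<in>{1..p}. cnj (lam j) \<in> lam ` {1..p}"
  shows "(\<forall>\<omega>::real. cmod (vf_dhat p lam (\<i> * complex_of_real \<omega>)) = 1)
    \<and> (\<forall>(l::nat) (xi::nat \<Rightarrow> complex). (\<forall>i<l. Re (xi i) = 0) \<longrightarrow>
         unitary_nat_mat l (vf_Delta p lam xi)
         \<and> (\<forall>(m::nat) (A::nat \<Rightarrow> nat \<Rightarrow> complex) (h::nat \<Rightarrow> complex).
              lsq_solutions l m (vf_Delta p lam xi) A h = lsq_solutions l m id_nat_mat A h))"
proof -
  define S where "S = {1..p}"
  have fin: "finite S" by (simp add: S_def)
  have inj: "inj_on lam S" using assms(2) by (simp add: S_def)
  have one: "cmod (vf_dhat p lam (\<i> * complex_of_real \<omega>)) = 1" for \<omega>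
  proof -
    define s where "s = \<i> * complex_of_real \<omega>"
    have sn: "s \<notin> lam ` S"
    proof
      assume "s \<in> lam ` S"
      then obtain x where x: "x \<in> S" "s = lam x" by auto
      then have "Re (lam x) = 0" proof -
        have "Re s = 0" by (simp add: s_def)
        thus ?thesis using x(2) by simp
      qed
      moreover have "Re (lam x) < 0" using assms(3) x(1) unfolding S_def by blast
      ultimately show False by simp
    qed
    have d: "vf_dhat p lam s = (\<Prod>l\<in>S. s + lam l) / (\<Prod>l\<in>S. s - lam l)"
      unfolding vf_dhat_def vf_beta_def S_def[symmetric]
      by (rule pf_identity[OF fin inj sn])
    define g where "g = (\<lambda>x. cmod (s + x))"
    have nm: "cmod (s - lam k) = g (cnj (lam k))" for k
    proof -
      have "cmod (s - lam k) = cmod (cnj (s - lam k))" by (rule complex_mod_cnj[symmetric])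
      also have "cnj (s - lam k) = - (s + cnj (lam k))" by (simp add: s_def complex_eq_iff)
      finally show ?thesis by (metis g_def norm_minus_cancel)
    qed
    have T: "cnj ` lam ` S = lam ` S"
      by (rule cnj_image_eq) (use fin assms(4) in \<open>auto simp: S_def\<close>)
    have "(\<Prod>l\<in>S. g (cnj (lam l))) = (\<Prod>x\<in>lam ` S. g (cnj x))"
      by (simp add: prod.reindex[OF inj])
    also have "\<dots> = (\<Prod>x\<in>cnj ` lam ` S. g x)"
      by (subst prod.reindex) (auto intro: inj_onI)
    also have "\<dots> = (\<Prod>l\<in>S. g (lam l))" unfolding T by (simp add: prod.reindex[OF inj])
    finally have eq: "(\<Prod>l\<in>S. cmod (s - lam l)) = (\<Prod>l\<in>S. cmod (s + lam l))"
      by (simp add: nm g_def)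
    have nz: "(\<Prod>l\<in>S. cmod (s - lam l)) \<noteq> 0" using sn fin by auto
    have "cmod (vf_dhat p lam s) = (\<Prod>l\<in>S. cmod (s + lam l)) / (\<Prod>l\<in>S. cmod (s - lam l))"
      unfolding d norm_divide by (simp add: prod_norm)
    also have "\<dots> = 1" using eq nz by simp
    finally show ?thesis by (simp add: s_def)
  qed
  have two: "unitary_nat_mat l (vf_Delta p lam xi)
         \<and> (\<forall>(m::nat) (A::nat \<Rightarrow> nat \<Rightarrow> complex) (h::nat \<Rightarrow> complex).
              lsq_solutions l m (vf_Delta p lam xi) A h = lsq_solutions l m id_nat_mat A h)"
    if re: "\<forall>i<l. Re (xi i) = 0" for l xi
  proof -
    have D: "vf_Delta p lam xi i k = (if i = k then 1 else 0)" if "i < l" for i k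
    proof -
      have "xi i = \<i> * complex_of_real (Im (xi i))" using re that by (simp add: complex_eq_iff)
      then have "cmod (vf_dhat p lam (xi i)) = 1" using one by metis
      then show ?thesis unfolding vf_Delta_def by auto
    qed
    have U: "unitary_nat_mat l (vf_Delta p lam xi)"
      unfolding unitary_nat_mat_def
    proof (intro allI impI)
      fix i k assume i: "i < l" and k: "k < l"
      have "(\<Sum>j<l. cnj (vf_Delta p lam xi j i) * vf_Delta p lam xi j k)
          = (\<Sum>j<l. if j = i then (if i = k then 1 else 0) else 0)"
        by (rule sum.cong) (auto simp: D)
      also have "\<dots> = (if i = k then 1 else 0)" using i by simp
      finally show "(\<Sum>j<l. cnj (vf_Delta p lam xi j i) * vf_Delta p lam xi j k) = (if i = k then 1 else 0)" .
    qed
    have N1: "vec_norm2 l (mat_vec l (vf_Delta p lam xi) v) = vec_norm2 l v" for v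
      by (rule diag_matvec) (simp add: D)
    have N2: "vec_norm2 l (mat_vec l id_nat_mat v) = vec_norm2 l v" for v
      by (rule diag_matvec) (simp add: id_nat_mat_def)
    show ?thesis using U unfolding lsq_solutions_def N1 N2 by simp
  qed
  show ?thesis using one two by blast
qed

end
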